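(* Consider the equation $\partial_t u = i\partial_x^2 u + u\,\partial_x u$ on $\mathbb{R}\times\mathbb{T}$, $\mathbb{T}=\mathbb{R}/(2\pi\mathbb{Z})$. There exist a mean-zero function $\phi\in L^2_0(\mathbb{T})$ and $t_*>0$ such that the corresponding solution $u$ on the time interval $[0,t_* )$ with $u|_{t=0}=\phi$ satisfies $$\lim_{t\to t_*-}\|u(t)\|_{L^p(\mathbb{T})}=\infty\quad\text{for every }1\le p\le\infty.$$ In particular, $\lim_{t\to t_*-}\|u(t)\|_{\mathcal{F}L_0^{s,p}(\mathbb{T})}=\infty$ for every $(s,p)$ with either $s>\frac12-\frac1p$, $p>2$, or $s\ge0$, $p=2$.
   Context: $L^2_0(\mathbb{T})$ denotes mean-zero $L^2$ functions. For $f$ on $\mathbb{T}$, $f_k=\frac1{2\pi}\int_{\mathbb{T}}f(x)e^{-ikx}dx$, $\mathbb{Z}_0=\mathbb{Z}\setminus\{0\}$, and $\mathcal{F}L_0^{s,p}(\mathbb{T})$ is the space of mean-zero functions with norm $\|f\|_{\mathcal{F}L_0^{s,p}}=\||k|^sf_k\|_{\ell^p(\mathbb{Z}_0)}$. *)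

theory Defs
  imports "HOL-Probability.Probability"
begin

text \<open>Functions on the torus T = R/(2 pi Z) are represented as 2pi-periodic functions
  real => complex. Integrals over T are Lebesgue integrals over [0, 2 pi].\<close>

definition periodic2pi :: "(real \<Rightarrow> complex) \<Rightarrow> bool" where
  "periodic2pi f \<longleftrightarrow> (\<forall>x. f (x + 2 * pi) = f x)"

definition fourier_coeff :: "(real \<Rightarrow> complex) \<Rightarrow> int \<Rightarrow> complex" where
  "fourier_coeff f k =
     complex_of_real (1 / (2 * pi)) *
       (LINT x:{0..2*pi}|lborel. f x * exp (- (\<i> * of_int k * of_real x)))"

definition L2_norm :: "(real \<Rightarrow> complex) \<Rightarrow> real" where
  "L2_norm f = sqrt (LINT x:{0..2*pi}|lborel. (norm (f x))^2)"

definition L2_0 :: "(real \<Rightarrow> complex) set" where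
  "L2_0 = {f. f \<in> borel_measurable lborel \<and> periodic2pi f \<and>
              set_integrable lborel {0..2*pi} (\<lambda>x. (norm (f x))^2) \<and>
              fourier_coeff f 0 = 0}"

definition Lp_norm :: "ereal \<Rightarrow> (real \<Rightarrow> complex) \<Rightarrow> ereal" where
  "Lp_norm p f =
     (if p = \<infinity> then esssup (restrict_space lborel {0..2*pi}) (\<lambda>x. ereal (norm (f x)))
      else (let I = (\<integral>\<^sup>+ x. ennreal (norm (f x) powr real_of_ereal p)
                          * indicator {0..2*pi} x \<partial>lborel)
            in if I = \<infinity> then \<infinity> else ereal (enn2real I powr (1 / real_of_ereal p))))"

definition FL_norm :: "real \<Rightarrow> ereal \<Rightarrow> (real \<Rightarrow> complex) \<Rightarrow> ereal" where
  "FL_norm s p f =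
     (if p = \<infinity> then (SUP k\<in>(UNIV - {0::int}). ereal (\<bar>real_of_int k\<bar> powr s * norm (fourier_coeff f k)))
      else (let I = (\<integral>\<^sup>+ k. ennreal ((\<bar>real_of_int k\<bar> powr s * norm (fourier_coeff f k))
                                   powr real_of_ereal p) \<partial>count_space (UNIV - {0::int}))
            in if I = \<infinity> then \<infinity> else ereal (enn2real I powr (1 / real_of_ereal p))))"

text \<open>u (time, space) is a solution on [0,T) of  u_t = i u_xx + u u_x  with u(0) = phi,
  in the sense: u in C([0,T); L^2_0(T)) and the equation holds in the (distributional)
  Fourier-coefficient form
    d/dt u_k = - i k^2 u_k + (i k / 2) sum_m u_m u_{k-m}
  (using u u_x = (1/2) d_x (u^2)).\<close>
definition is_solution :: "(real \<Rightarrow> real \<Rightarrow> complex) \<Rightarrow> (real \<Rightarrow> complex) \<Rightarrow> real \<Rightarrow> bool" where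
  "is_solution u \<phi> T \<longleftrightarrow>
     u 0 = \<phi> \<and>
     (\<forall>t\<in>{0..<T}. u t \<in> L2_0) \<and>
     (\<forall>t\<in>{0..<T}. ((\<lambda>\<tau>. L2_norm (\<lambda>x. u \<tau> x - u t x)) \<longlongrightarrow> 0) (at t within {0..<T})) \<and>
     (\<forall>k::int. \<forall>t\<in>{0..<T}.
        ((\<lambda>\<tau>. fourier_coeff (u \<tau>) k) has_vector_derivative
           (- (\<i> * of_int (k^2)) * fourier_coeff (u t) k
            + (\<i> * of_int k / 2) * (\<Sum>\<^sub>\<infinity>m::int. fourier_coeff (u t) m * fourier_coeff (u t) (k - m))))
        (at t within {0..<T}))"

end

theory Submission imports Defs
begin

definition Gc :: "complex \<Rightarrow> complex" where
  "Gc w = 81/100 - 2/5 * exp (- (2 * \<i> * w))"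
definition Ac :: "complex \<Rightarrow> complex" where
  "Ac w = exp (- (\<i> * w)) * (- (9/10) + csqrt (Gc w)) / 2"
definition Bc :: "complex \<Rightarrow> complex" where
  "Bc w = exp (- (\<i> * w)) * (- (9/10) - csqrt (Gc w)) / 2"
definition DA :: "complex \<Rightarrow> complex" where
  "DA w = - \<i> * Ac w + exp (- (\<i> * w)) * ((4/5) * \<i> * exp (- (2 * \<i> * w)) / (2 * csqrt (Gc w))) / 2"
definition DB :: "complex \<Rightarrow> complex" where
  "DB w = - \<i> * Bc w - exp (- (\<i> * w)) * ((4/5) * \<i> * exp (- (2 * \<i> * w)) / (2 * csqrt (Gc w))) / 2"

lemma Re_Gc: "Re (Gc (of_real t)) \<ge> 41/100"
proof -
  have "exp (- (2 * \<i> * complex_of_real t)) = cis (-(2*t))"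
    by (simp add: cis_conv_exp mult_ac)
  then have "Re (Gc (of_real t)) = 81/100 - 2/5 * cos (2*t)"
    by (simp add: Gc_def)
  moreover have "cos (2*t) \<le> 1" by simp
  ultimately show ?thesis by linarith
qed

lemma Gc_nonpos: "Gc (of_real t) \<notin> \<real>\<^sub>\<le>\<^sub>0"
  using Re_Gc[of t] by (auto simp: complex_nonpos_Reals_iff)

lemma csqrt_Gc_nz: "csqrt (Gc (of_real t)) \<noteq> 0"
  using Re_Gc[of t] by auto

lemma Ac_deriv: "(Ac has_field_derivative DA (of_real t)) (at (of_real t))"
  unfolding Ac_def DA_def Gc_def
  apply (rule derivative_eq_intros refl | use Gc_nonpos[of t, unfolded Gc_def] in simp)+
  done

lemma Bc_deriv: "(Bc has_field_derivative DB (of_real t)) (at (of_real t))"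
  unfolding Bc_def DB_def Gc_def
  apply (rule derivative_eq_intros refl | use Gc_nonpos[of t, unfolded Gc_def] in simp)+
  done

lemma DA_rel_gen:
  fixes E S :: complex
  assumes S2: "S^2 = 81/100 - 2/5 * E^2" and S0: "S \<noteq> 0"
  defines "A \<equiv> E * (- (9/10) + S) / 2" and "B \<equiv> E * (- (9/10) - S) / 2"
  shows "(- \<i> * A + E * ((4/5) * \<i> * E^2 / (2 * S)) / 2) * (B - A) = \<i> * A * (A - 3*B)"
    and "(- \<i> * B - E * ((4/5) * \<i> * E^2 / (2 * S)) / 2) * (A - B) = \<i> * B * (B - 3*A)"
proof -
  have BA: "B - A = - E * S" by (simp add: A_def B_def field_simps)
  have k: "E * ((4/5) * \<i> * E^2 / (2 * S)) / 2 * (E * S) = \<i> * E^4 / 5"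
    using S0 by (simp add: field_simps power2_eq_square power4_eq_xxxx)
  show "(- \<i> * A + E * ((4/5) * \<i> * E^2 / (2 * S)) / 2) * (B - A) = \<i> * A * (A - 3*B)"
  proof -
    have "(- \<i> * A + E * ((4/5) * \<i> * E^2 / (2 * S)) / 2) * (B - A) = \<i> * A * E * S - \<i> * E^4 / 5"
      unfolding BA using k by (simp add: algebra_simps)
    also have "\<dots> = \<i> * A * (A - 3*B)"
    proof -
      have "\<i> * A * (A - 3*B) = (\<i> * A * E * S - \<i> * E^4 / 5) + (\<i> * E^2/2) * (S^2 - (81/100 - 2/5*E^2))"
        unfolding A_def B_def by (simp add: field_simps power2_eq_square power4_eq_xxxx)
      then show ?thesis using S2 by simp
    qed
    finally show ?thesis .
  qed
  show "(- \<i> * B - E * ((4/5) * \<i> * E^2 / (2 * S)) / 2) * (A - B) = \<i> * B * (B - 3*A)"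
  proof -
    have AB: "A - B = E * S" using BA by (simp add: algebra_simps)
    have "(- \<i> * B - E * ((4/5) * \<i> * E^2 / (2 * S)) / 2) * (A - B) = - \<i> * B * E * S - \<i> * E^4 / 5"
      unfolding AB using k by (simp add: algebra_simps)
    also have "\<dots> = \<i> * B * (B - 3*A)"
    proof -
      have "\<i> * B * (B - 3*A) = (- \<i> * B * E * S - \<i> * E^4 / 5) + (\<i> * E^2/2) * (S^2 - (81/100 - 2/5*E^2))"
        unfolding A_def B_def by (simp add: field_simps power2_eq_square power4_eq_xxxx)
      then show ?thesis using S2 by simp
    qed
    finally show ?thesis .
  qed
qed

lemma exp2: "exp (- (2 * \<i> * w)) = (exp (- (\<i> * w)))^2"
  by (simp add: exp_double[symmetric] mult_ac)

lemma DA_rel: "DA (of_real t) * (Bc (of_real t) - Ac (of_real t)) = \<i> * Ac (of_real t) * (Ac (of_real t) - 3 * Bc (of_real t))"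
  and DB_rel: "DB (of_real t) * (Ac (of_real t) - Bc (of_real t)) = \<i> * Bc (of_real t) * (Bc (of_real t) - 3 * Ac (of_real t))"
  unfolding DA_def DB_def Ac_def Bc_def exp2
  by (rule DA_rel_gen; use csqrt_Gc_nz[of t] in \<open>simp add: Gc_def exp2\<close>)+

lemma AB_ne: "Bc (of_real t) \<noteq> Ac (of_real t)"
  using csqrt_Gc_nz[of t] by (simp add: Ac_def Bc_def field_simps)

lemma exp_ijx_2pi: "exp (\<i> * of_int j * of_real (2*pi)) = 1"
proof -
  have "exp (\<i> * of_int j * of_real (2*pi)) = cis (2 * pi * of_int j)"
    by (simp add: cis_conv_exp mult_ac)
  then show ?thesis by simp
qed

lemma cont_expj: "continuous_on S (\<lambda>x::real. exp (\<i> * of_int j * of_real x))"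
  by (intro continuous_intros)

lemma int_exp: "(LINT x:{0..2*pi}|lborel. exp (\<i> * of_int j * of_real x)) = (if j = 0 then 2*pi else 0)"
proof (cases "j = 0")
  case True
  then show ?thesis by (simp add: set_lebesgue_integral_def scaleR_conv_of_real)
next
  case False
  have "(LINT x:{0..2*pi}|lborel. exp (\<i> * of_int j * of_real x)) = (LBINT x=ereal 0..ereal (2*pi). exp (\<i> * of_int j * of_real x))"
    using interval_integral_Icc[of 0 "2*pi" "\<lambda>x. exp (\<i> * of_int j * of_real x)"] by simp
  also have "\<dots> = exp (\<i> * of_int j * of_real (2*pi)) / (\<i> * of_int j) - exp (\<i> * of_int j * of_real 0) / (\<i> * of_int j)"
    by (rule interval_integral_FTC_finite[OF cont_expj])
       (use False in \<open>auto intro!: derivative_eq_intros has_vector_derivative_real_field simp: field_simps\<close>)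
  also have "\<dots> = 0" by (simp only: exp_ijx_2pi) simp
  finally show ?thesis using False by simp
qed

lemma geom_expand:
  assumes q: "norm q < 1"
  shows "(\<lambda>n. q^(n+1) * exp (\<i> * of_int (int n + 1 - k) * of_real x)) sums
    (q * exp (\<i> * of_real x) / (1 - q * exp (\<i> * of_real x)) * exp (- (\<i> * of_int k * of_real x)))"
proof -
  let ?z = "q * exp (\<i> * of_real x)"
  have nz: "norm ?z < 1" using q by (simp add: norm_mult)
  have "(\<lambda>n. ?z^n) sums (1 / (1 - ?z))" by (rule geometric_sums[OF nz])
  then have S: "(\<lambda>n. (?z * exp (- (\<i> * of_int k * of_real x))) * ?z^n) sums ((?z * exp (- (\<i> * of_int k * of_real x))) * (1 / (1 - ?z)))"
    by (rule sums_mult)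
  have E: "\<And>n. (?z * exp (- (\<i> * of_int k * of_real x))) * ?z^n = q^(n+1) * exp (\<i> * of_int (int n + 1 - k) * of_real x)"
  proof -
    fix n
    have "exp (\<i> * of_int (int n + 1 - k) * of_real x) = exp (\<i> * of_real x) ^ (n+1) * exp (- (\<i> * of_int k * of_real x))"
      by (simp add: exp_of_nat_mult[symmetric] exp_add[symmetric] algebra_simps)
    then show "(?z * exp (- (\<i> * of_int k * of_real x))) * ?z^n = q^(n+1) * exp (\<i> * of_int (int n + 1 - k) * of_real x)"
      by (simp add: power_mult_distrib algebra_simps)
  qed
  have "(\<lambda>n. q^(n+1) * exp (\<i> * of_int (int n + 1 - k) * of_real x)) sums ((?z * exp (- (\<i> * of_int k * of_real x))) * (1 / (1 - ?z)))"
    using S unfolding E .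
  moreover have "(?z * exp (- (\<i> * of_int k * of_real x))) * (1 / (1 - ?z)) = ?z / (1 - ?z) * exp (- (\<i> * of_int k * of_real x))"
    by simp
  ultimately show ?thesis by simp
qed

lemma fc_geom:
  assumes q: "norm q < 1"
  shows "fourier_coeff (\<lambda>x. q * exp (\<i> * of_real x) / (1 - q * exp (\<i> * of_real x))) k = (if k \<ge> 1 then q ^ nat k else 0)"
proof -
  define f where "f n x = indicator {0..2*pi} x *\<^sub>R (q^(n+1) * exp (\<i> * of_int (int n + 1 - k) * of_real x))" for n x
  have intf: "integrable lborel (f n)" for n
    unfolding f_def by (rule borel_integrable_compact) (auto intro!: continuous_intros)
  have nf: "norm (f n x) = indicator {0..2*pi} x * norm q ^ (n+1)" for n x
    by (simp add: f_def norm_mult norm_power indicator_def)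
  have inorm: "(\<integral>x. norm (f n x) \<partial>lborel) = norm q ^ (n+1) * (2*pi)" for n
    unfolding nf by simp
  have sum1: "AE x in lborel. summable (\<lambda>n. norm (f n x))"
    unfolding nf using q by (auto intro!: summable_mult summable_mult2 simp: power_Suc2 summable_geometric)
  have sum2: "summable (\<lambda>n. (\<integral>x. norm (f n x) \<partial>lborel))"
    unfolding inorm using q by (auto intro!: summable_mult2 simp: power_Suc2 summable_geometric)
  have eq: "indicator {0..2*pi} x *\<^sub>R (q * exp (\<i> * of_real x) / (1 - q * exp (\<i> * of_real x)) * exp (- (\<i> * of_int k * of_real x))) = (\<Sum>n. f n x)" for x
  proof -
    have "(\<lambda>n. f n x) sums (indicator {0..2*pi} x *\<^sub>R (q * exp (\<i> * of_real x) / (1 - q * exp (\<i> * of_real x)) * exp (- (\<i> * of_int k * of_real x))))"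
      unfolding f_def by (rule sums_scaleR_right[OF geom_expand[OF q]])
    then show ?thesis by (simp add: sums_iff)
  qed
  have "(LINT x:{0..2*pi}|lborel. q * exp (\<i> * of_real x) / (1 - q * exp (\<i> * of_real x)) * exp (- (\<i> * of_int k * of_real x)))
      = (\<Sum>n. integral\<^sup>L lborel (f n))"
    unfolding set_lebesgue_integral_def eq by (rule integral_suminf[OF intf sum1 sum2])
  also have "\<dots> = (\<Sum>n. q^(n+1) * (if int n + 1 - k = 0 then 2*pi else 0))"
  proof -
    have "integral\<^sup>L lborel (f n) = q^(n+1) * (LINT x:{0..2*pi}|lborel. exp (\<i> * of_int (int n + 1 - k) * of_real x))" for n
      unfolding f_def set_lebesgue_integral_def by (simp add: scaleR_conv_of_real mult_ac del: of_int_diff of_int_add)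
    then show ?thesis by (simp only: int_exp)
  qed
  also have "\<dots> = (if k \<ge> 1 then 2 * pi * q ^ nat k else 0)"
  proof (cases "k \<ge> 1")
    case True
    have "(\<lambda>n. q^(n+1) * (if int n + 1 - k = 0 then 2*pi else 0)) = (\<lambda>n. if n = nat (k-1) then 2 * pi * q^(n+1) else 0)"
      using True by (auto simp: fun_eq_iff)
    moreover have "(\<lambda>n. if n = nat (k-1) then 2 * pi * q^(n+1) else 0) sums (2 * pi * q^(nat (k-1) + 1))"
      by (rule sums_single)
    moreover have "q * q ^ nat (k-1) = q ^ nat k"
    proof -
      have "Suc (nat (k-1)) = nat k" using True by simp
      then show ?thesis by (metis power_Suc)
    qed
    ultimately show ?thesis using True by (simp add: sums_iff)
  next
    case False
    then have "(\<lambda>n. q^(n+1) * (if int n + 1 - k = 0 then 2*pi else 0)) = (\<lambda>n. 0)"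
      by (auto simp: fun_eq_iff)
    then show ?thesis using False by simp
  qed
  finally show ?thesis unfolding fourier_coeff_def by simp
qed


definition aa :: "real \<Rightarrow> complex" where "aa t = Ac (of_real t)"
definition bb :: "real \<Rightarrow> complex" where "bb t = Bc (of_real t)"

lemma norm_Gc: "norm (Gc (of_real t)) ^ 2 = 6561/10000 + 4/25 - (81/125) * cos (2*t)"
proof -
  have e: "exp (- (2 * \<i> * complex_of_real t)) = cis (-(2*t))"
    by (simp add: cis_conv_exp mult_ac)
  have R: "Re (Gc (of_real t)) = 81/100 - 2/5 * cos (2*t)" and I: "Im (Gc (of_real t)) = 2/5 * sin (2*t)"
    by (simp_all add: Gc_def e)
  have eq2: "(81/100 - 2/5 * cos (2*t))^2 + (2/5 * sin (2*t))^2 = 6561/10000 - 81/125 * cos (2*t) + 4/25 * ((sin (2*t))^2 + (cos (2*t))^2)"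
    by algebra
  have sc: "(sin (2*t))^2 + (cos (2*t))^2 = 1" by (rule sin_cos_squared_add)
  show ?thesis
    unfolding cmod_power2 R I eq2 sc by simp
qed

lemma norm_Gc_le: "norm (Gc (of_real t)) \<le> 121/100"
proof -
  have "norm (Gc (of_real t)) ^ 2 \<le> (121/100)^2" unfolding norm_Gc by (simp add: power2_eq_square) (use cos_ge_minus_one[of "2*t"] in linarith)
  then show ?thesis by (rule power2_le_imp_le) simp
qed

lemma norm_Gc_less: assumes "0 \<le> t" "t < pi/2" shows "norm (Gc (of_real t)) < 121/100"
proof -
  have "cos (2*t) > -1"
  proof -
    have "cos (2*t) > cos pi" using assms by (intro cos_monotone_0_pi) auto
    then show ?thesis by simp
  qed
  then have "norm (Gc (of_real t)) ^ 2 < (121/100)^2" unfolding norm_Gc by (simp add: power2_eq_square)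
  then show ?thesis by (rule power2_less_imp_less) simp
qed

lemma sqrt121: "sqrt (121/100) = 11/10" by (rule real_sqrt_unique) (simp_all add: power2_eq_square)

lemma norm_expit: "norm (exp (- (\<i> * complex_of_real t))) = 1"
  by (simp add: norm_exp_eq_Re)

lemma norm_aa: "norm (aa t) \<le> 3/4"
proof -
  let ?S = "csqrt (Gc (of_real t))"
  have "norm (aa t) = norm (- (9/10) + ?S) / 2"
    by (simp add: aa_def Ac_def norm_mult norm_divide norm_expit)
  moreover have "norm (- (9/10) + ?S) ^ 2 \<le> (3/2)^2"
  proof -
    have "norm (- (9/10) + ?S) ^ 2 = (Re ?S - 9/10)^2 + (Im ?S)^2" unfolding cmod_power2 by simp
    also have "\<dots> = norm ?S ^ 2 - 9/5 * Re ?S + 81/100" unfolding cmod_power2 by (simp add: power2_eq_square algebra_simps)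
    also have "\<dots> \<le> 121/100 + 81/100"
    proof -
      have "norm ?S ^ 2 = norm (Gc (of_real t))" by simp
      then show ?thesis using norm_Gc_le[of t] Re_csqrt[of "Gc (of_real t)"] by linarith
    qed
    finally show ?thesis by (simp add: power2_eq_square)
  qed
  then have "norm (- (9/10) + ?S) \<le> 3/2" by (rule power2_le_imp_le) auto
  ultimately show ?thesis by simp
qed

lemma norm_bb_le: "norm (bb t) \<le> 1"
proof -
  let ?S = "csqrt (Gc (of_real t))"
  have "norm (bb t) = norm (9/10 + ?S) / 2"
  proof -
    have "norm (bb t) = norm (- (9/10) - ?S) / 2"
      by (simp add: bb_def Bc_def norm_mult norm_divide norm_expit)
    also have "- (9/10) - ?S = - (9/10 + ?S)" by simp
    finally show ?thesis by (simp only: norm_minus_cancel)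
  qed
  moreover have "norm (9/10 + ?S) \<le> 9/10 + sqrt (norm (Gc (of_real t)))"
    using norm_triangle_ineq[of "9/10::complex" ?S] by simp
  moreover have "sqrt (norm (Gc (of_real t))) \<le> 11/10"
    using norm_Gc_le[of t] real_sqrt_le_mono[of "norm (Gc (of_real t))" "121/100"] sqrt121 by simp
  ultimately show ?thesis by simp
qed

lemma norm_bb_less: assumes "0 \<le> t" "t < pi/2" shows "norm (bb t) < 1"
proof -
  let ?S = "csqrt (Gc (of_real t))"
  have "norm (bb t) = norm (9/10 + ?S) / 2"
  proof -
    have "norm (bb t) = norm (- (9/10) - ?S) / 2"
      by (simp add: bb_def Bc_def norm_mult norm_divide norm_expit)
    also have "- (9/10) - ?S = - (9/10 + ?S)" by simp
    finally show ?thesis by (simp only: norm_minus_cancel)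
  qed
  moreover have "norm (9/10 + ?S) \<le> 9/10 + sqrt (norm (Gc (of_real t)))"
    using norm_triangle_ineq[of "9/10::complex" ?S] by simp
  moreover have "sqrt (norm (Gc (of_real t))) < 11/10"
    using norm_Gc_less[OF assms] real_sqrt_less_mono[of "norm (Gc (of_real t))" "121/100"] sqrt121 by simp
  ultimately show ?thesis by simp
qed

lemma aa_vd: "(aa has_vector_derivative DA (of_real t)) (at t within S)"
  unfolding aa_def[abs_def] by (rule has_vector_derivative_real_field[OF Ac_deriv])
lemma bb_vd: "(bb has_vector_derivative DB (of_real t)) (at t within S)"
  unfolding bb_def[abs_def] by (rule has_vector_derivative_real_field[OF Bc_deriv])

lemma isCont_aa: "isCont aa t"
  using aa_vd[of t UNIV] has_vector_derivative_continuous by blast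
lemma isCont_bb: "isCont bb t"
  using bb_vd[of t UNIV] has_vector_derivative_continuous by blast

lemma Gc_pi2: "Gc (of_real (pi/2)) = 121/100"
proof -
  have "exp (- (2 * \<i> * complex_of_real (pi/2))) = cis (-pi)"
    by (simp add: cis_conv_exp mult_ac)
  moreover have "cis (-pi) = -1" by (simp add: complex_eq_iff)
  ultimately show ?thesis by (simp add: Gc_def)
qed

lemma csqrt_Gc_pi2: "csqrt (Gc (of_real (pi/2))) = 11/10"
proof -
  show ?thesis unfolding Gc_pi2 by (simp add: csqrt_of_real_nonneg sqrt121)
qed

lemma expit_pi2: "exp (- (\<i> * complex_of_real (pi/2))) = - \<i>"
proof -
  have "exp (- (\<i> * complex_of_real (pi/2))) = cis (-(pi/2))"
    by (simp add: cis_conv_exp mult_ac)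
  then show ?thesis by (simp add: cis.ctr complex_eq_iff)
qed

lemma aa_pi2: "aa (pi/2) = - \<i> / 10"
  unfolding aa_def Ac_def csqrt_Gc_pi2 expit_pi2 by simp
lemma bb_pi2: "bb (pi/2) = \<i>"
  unfolding bb_def Bc_def csqrt_Gc_pi2 expit_pi2 by simp

lemma tele: "((a::complex) - b) * (\<Sum>m<j. a^(m+1) * b^(j-m)) = a^(j+1) * b - a * b^(j+1)"
proof (induction j)
  case 0 then show ?case by simp
next
  case (Suc j)
  have "(\<Sum>m<Suc j. a^(m+1) * b^(Suc j-m)) = b * (\<Sum>m<j. a^(m+1) * b^(j-m)) + a^(j+1)*b"
    by (simp add: sum_distrib_left Suc_diff_le mult_ac)
  then have "(a - b) * (\<Sum>m<Suc j. a^(m+1) * b^(Suc j-m)) = b*((a - b) * (\<Sum>m<j. a^(m+1) * b^(j-m))) + (a-b)*a^(j+1)*b"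
    by (simp add: algebra_simps)
  also have "\<dots> = a^(Suc j+1) * b - a * b^(Suc j+1)" unfolding Suc.IH by (simp add: algebra_simps)
  finally show ?case .
qed

lemma sum_reindex1: "(\<Sum>m\<in>{1..<Suc j}. f m (Suc j - m)) = (\<Sum>m<j. f (m+1) (j - m))"
proof -
  have "(\<Sum>m\<in>{1..<Suc j}. f m (Suc j - m)) = (\<Sum>m\<in>{0..<j}. f (Suc m) (Suc j - Suc m))"
    by (subst sum.shift_bounds_Suc_ivl[symmetric]) simp
  then show ?thesis by (simp add: atLeast0LessThan)
qed

lemma conv_id:
  fixes a b :: complex
  shows "(\<Sum>m\<in>{1..<Suc j}. (a^m + b^m) * (a^(Suc j - m) + b^(Suc j - m)))
     = of_nat j * (a^(Suc j) + b^(Suc j)) + (\<Sum>m<j. a^(m+1) * b^(j-m)) + (\<Sum>m<j. b^(m+1) * a^(j-m))"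
proof -
  have "(\<Sum>m\<in>{1..<Suc j}. (a^m + b^m) * (a^(Suc j - m) + b^(Suc j - m)))
     = (\<Sum>m<j. (a^(m+1) + b^(m+1)) * (a^(j-m) + b^(j-m)))"
    by (rule sum_reindex1)
  also have "\<dots> = (\<Sum>m<j. (a^(Suc j) + b^(Suc j)) + a^(m+1) * b^(j-m) + b^(m+1) * a^(j-m))"
  proof (rule sum.cong[OF refl])
    fix m assume "m \<in> {..<j}"
    then have e: "a^(m+1) * a^(j-m) = a^(Suc j)" "b^(m+1) * b^(j-m) = b^(Suc j)"
      by (simp_all flip: power_add)
    have "(a^(m+1) + b^(m+1)) * (a^(j-m) + b^(j-m)) = (a^(m+1) * a^(j-m) + b^(m+1) * b^(j-m)) + a^(m+1) * b^(j-m) + b^(m+1) * a^(j-m)"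
      by algebra
    then show "(a^(m+1) + b^(m+1)) * (a^(j-m) + b^(j-m)) = (a^(Suc j) + b^(Suc j)) + a^(m+1) * b^(j-m) + b^(m+1) * a^(j-m)"
      unfolding e .
  qed
  also have "\<dots> = of_nat j * (a^(Suc j) + b^(Suc j)) + (\<Sum>m<j. a^(m+1) * b^(j-m)) + (\<Sum>m<j. b^(m+1) * a^(j-m))"
    by (simp add: sum.distrib)
  finally show ?thesis .
qed

lemma ode_alg:
  fixes a b Da Db :: complex
  assumes ab: "b \<noteq> a" and Da: "Da * (b - a) = \<i> * a * (a - 3*b)" and Db: "Db * (a - b) = \<i> * b * (b - 3*a)"
  shows "of_nat (Suc j) * (2 * (a^j * Da + b^j * Db)) =
     - (\<i> * of_nat (Suc j)^2) * (2 * (a^(Suc j) + b^(Suc j)))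
     + (\<i> * of_nat (Suc j) / 2) * (\<Sum>m\<in>{1..<Suc j}. (2*(a^m + b^m)) * (2*(a^(Suc j - m) + b^(Suc j - m))))"
proof -
  define S1 where "S1 = (\<Sum>m<j. a^(m+1) * b^(j-m))"
  define S2 where "S2 = (\<Sum>m<j. b^(m+1) * a^(j-m))"
  have t1: "(a - b) * S1 = a^(j+1) * b - a * b^(j+1)" unfolding S1_def by (rule tele)
  have t2: "(b - a) * S2 = b^(j+1) * a - b * a^(j+1)" unfolding S2_def by (rule tele)
  have sum4: "(\<Sum>m\<in>{1..<Suc j}. (2*(a^m + b^m)) * (2*(a^(Suc j - m) + b^(Suc j - m))))
     = 4 * (of_nat j * (a^(Suc j) + b^(Suc j)) + S1 + S2)"
    unfolding S1_def S2_def conv_id[symmetric] by (simp add: sum_distrib_left algebra_simps)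
  have ba: "b - a \<noteq> 0" using ab by simp
  have "(b - a) * (of_nat (Suc j) * (2 * (a^j * Da + b^j * Db))) =
     (b - a) * (- (\<i> * of_nat (Suc j)^2) * (2 * (a^(Suc j) + b^(Suc j)))
     + (\<i> * of_nat (Suc j) / 2) * (4 * (of_nat j * (a^(Suc j) + b^(Suc j)) + S1 + S2)))"
  proof -
    have L: "(b - a) * (of_nat (Suc j) * (2 * (a^j * Da + b^j * Db)))
      = 2 * of_nat (Suc j) * (a^j * (Da * (b - a)) - b^j * (Db * (a - b)))"
      by (simp add: algebra_simps)
    have R: "(b - a) * (- (\<i> * of_nat (Suc j)^2) * (2 * (a^(Suc j) + b^(Suc j)))
     + (\<i> * of_nat (Suc j) / 2) * (4 * (of_nat j * (a^(Suc j) + b^(Suc j)) + S1 + S2)))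
      = 2 * of_nat (Suc j) * \<i> * ( - (b - a) * (a^(Suc j) + b^(Suc j)) - ((a-b)*S1) + (b-a)*S2)"
    proof -
      have gen: "\<And>n J A::complex. J = n - 1 \<Longrightarrow> (b - a) * (- (\<i> * n^2) * (2 * A) + (\<i> * n / 2) * (4 * (J * A + S1 + S2)))
        = 2 * n * \<i> * ( - (b - a) * A - ((a-b)*S1) + (b-a)*S2)"
      proof -
        fix n J A :: complex assume "J = n - 1"
        have h2: "(\<i> * n / 2) * (4 * (J * A + S1 + S2)) = 2 * \<i> * n * (J * A + S1 + S2)" by simp
        show "(b - a) * (- (\<i> * n^2) * (2 * A) + (\<i> * n / 2) * (4 * (J * A + S1 + S2)))
        = 2 * n * \<i> * ( - (b - a) * A - ((a-b)*S1) + (b-a)*S2)"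
          unfolding h2 \<open>J = n - 1\<close> by (simp add: power2_eq_square) algebra
      qed
      show ?thesis by (rule gen) simp
    qed
    show ?thesis unfolding L R Da Db t1 t2 by (simp add: algebra_simps)
  qed
  then show ?thesis using ba sum4 by simp
qed


definition FF :: "complex \<Rightarrow> real \<Rightarrow> complex" where
  "FF q x = q * exp (\<i> * of_real x) / (1 - q * exp (\<i> * of_real x))"
definition uu :: "real \<Rightarrow> real \<Rightarrow> complex" where
  "uu t x = 2 * FF (aa t) x + 2 * FF (bb t) x"
definition CC :: "real \<Rightarrow> int \<Rightarrow> complex" where
  "CC t k = (if k \<ge> 1 then 2 * (aa t ^ nat k + bb t ^ nat k) else 0)"

lemma FF_den: "norm q < 1 \<Longrightarrow> 1 - q * exp (\<i> * of_real x) \<noteq> 0"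
proof
  assume "norm q < 1" "1 - q * exp (\<i> * of_real x) = 0"
  then have "q * exp (\<i> * of_real x) = 1" by simp
  then have "norm (q * exp (\<i> * of_real x)) = 1" by simp
  with \<open>norm q < 1\<close> show False by (simp add: norm_mult)
qed

lemma cont_FF: "norm q < 1 \<Longrightarrow> continuous_on S (FF q)"
  unfolding FF_def[abs_def] by (intro continuous_intros) (auto dest: FF_den)

lemma fc_FF: "norm q < 1 \<Longrightarrow> fourier_coeff (FF q) k = (if k \<ge> 1 then q ^ nat k else 0)"
  unfolding FF_def[abs_def] by (rule fc_geom)

lemma set_int_cont: "continuous_on {0..2*pi} f \<Longrightarrow> set_integrable lborel {0..2*pi} (f :: real \<Rightarrow> complex)"
  unfolding set_integrable_def by (rule borel_integrable_compact) auto

lemma fc_lin: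
  assumes f: "continuous_on {0..2*pi} f" and g: "continuous_on {0..2*pi} g"
  shows "fourier_coeff (\<lambda>x. c * f x + d * g x) k = c * fourier_coeff f k + d * fourier_coeff g k"
proof -
  have cf: "continuous_on {0..2*pi} (\<lambda>x. c * f x * exp (- (\<i> * of_int k * of_real x)))"
    by (intro continuous_intros f)
  have cg: "continuous_on {0..2*pi} (\<lambda>x. d * g x * exp (- (\<i> * of_int k * of_real x)))"
    by (intro continuous_intros g)
  have "(LINT x:{0..2*pi}|lborel. (c * f x + d * g x) * exp (- (\<i> * of_int k * of_real x)))
     = (LINT x:{0..2*pi}|lborel. c * f x * exp (- (\<i> * of_int k * of_real x)) + d * g x * exp (- (\<i> * of_int k * of_real x)))"
    by (simp add: distrib_right)
  also have "\<dots> = (LINT x:{0..2*pi}|lborel. c * f x * exp (- (\<i> * of_int k * of_real x))) + (LINT x:{0..2*pi}|lborel. d * g x * exp (- (\<i> * of_int k * of_real x)))"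
    by (rule set_integral_add(2)[OF set_int_cont[OF cf] set_int_cont[OF cg]])
  also have "\<dots> = c * (LINT x:{0..2*pi}|lborel. f x * exp (- (\<i> * of_int k * of_real x))) + d * (LINT x:{0..2*pi}|lborel. g x * exp (- (\<i> * of_int k * of_real x)))"
    by (simp add: mult.assoc)
  finally show ?thesis unfolding fourier_coeff_def by (simp add: algebra_simps)
qed

lemma ab_small: assumes "0 \<le> t" "t < pi/2" shows "norm (aa t) < 1" "norm (bb t) < 1"
  using norm_aa[of t] norm_bb_less[OF assms] by auto

lemma fc_uu: assumes "0 \<le> t" "t < pi/2" shows "fourier_coeff (uu t) k = CC t k"
proof -
  have "fourier_coeff (uu t) k = 2 * fourier_coeff (FF (aa t)) k + 2 * fourier_coeff (FF (bb t)) k"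
    unfolding uu_def[abs_def] by (rule fc_lin; rule cont_FF; use ab_small[OF assms] in auto)
  then show ?thesis using ab_small[OF assms] by (simp add: fc_FF CC_def algebra_simps)
qed

lemma cont_uu: assumes "0 \<le> t" "t < pi/2" shows "continuous_on S (uu t)"
  unfolding uu_def[abs_def] using ab_small[OF assms] by (intro continuous_intros cont_FF) auto

lemma uu_L2: assumes "0 \<le> t" "t < pi/2" shows "uu t \<in> L2_0"
proof -
  have m: "uu t \<in> borel_measurable lborel"
    using cont_uu[OF assms, of UNIV] borel_measurable_continuous_onI by (simp add: measurable_lborel1)
  have p: "periodic2pi (uu t)"
  proof -
    have "exp (\<i> * complex_of_real (x + 2*pi)) = exp (\<i> * complex_of_real x)" for x
      by (simp add: algebra_simps exp_add)
    then show ?thesis by (simp add: periodic2pi_def uu_def FF_def)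
  qed
  have i: "set_integrable lborel {0..2*pi} (\<lambda>x. (norm (uu t x))^2)"
    unfolding set_integrable_def
    by (rule borel_integrable_compact) (auto intro!: continuous_intros cont_uu[OF assms])
  have z: "fourier_coeff (uu t) 0 = 0" by (simp add: fc_uu[OF assms] CC_def)
  show ?thesis using m p i z by (simp add: L2_0_def)
qed


lemma CC_pow_deriv:
  "((\<lambda>\<tau>. 2 * (aa \<tau> ^ n + bb \<tau> ^ n)) has_vector_derivative
     (2 * (of_nat n * aa t ^ (n - 1) * DA (of_real t) + of_nat n * bb t ^ (n - 1) * DB (of_real t)))) (at t within S)"
proof -
  have "((\<lambda>w. 2 * (Ac w ^ n + Bc w ^ n)) has_field_derivative
     (2 * (of_nat n * Ac (of_real t) ^ (n - 1) * DA (of_real t) + of_nat n * Bc (of_real t) ^ (n - 1) * DB (of_real t)))) (at (of_real t))"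
    by (rule derivative_eq_intros Ac_deriv Bc_deriv refl | simp)+
  from has_vector_derivative_real_field[OF this] show ?thesis
    unfolding aa_def bb_def .
qed

lemma CC_conv:
  assumes k: "k \<ge> 1"
  shows "(\<Sum>\<^sub>\<infinity>m::int. CC t m * CC t (k - m)) =
    (\<Sum>m\<in>{1..<nat k}. (2*(aa t^m + bb t^m)) * (2*(aa t^(nat k - m) + bb t^(nat k - m))))"
proof -
  have "(\<Sum>\<^sub>\<infinity>m::int. CC t m * CC t (k - m)) = (\<Sum>\<^sub>\<infinity>m\<in>{1..k-1}. CC t m * CC t (k - m))"
    by (rule infsum_cong_neutral) (auto simp: CC_def)
  also have "\<dots> = (\<Sum>m\<in>{1..k-1}. CC t m * CC t (k - m))" by simp
  also have "{1..k-1} = int ` {1..<nat k}"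
  proof -
    have "x \<in> int ` {1..<nat k}" if "x \<in> {1..k-1}" for x
      using that by (auto intro!: image_eqI[of _ _ "nat x"])
    then show ?thesis by auto
  qed
  also have "(\<Sum>m\<in>int ` {1..<nat k}. CC t m * CC t (k - m)) = (\<Sum>m\<in>{1..<nat k}. CC t (int m) * CC t (k - int m))"
    by (subst sum.reindex) auto
  also have "\<dots> = (\<Sum>m\<in>{1..<nat k}. (2*(aa t^m + bb t^m)) * (2*(aa t^(nat k - m) + bb t^(nat k - m))))"
  proof (rule sum.cong[OF refl])
    fix m assume "m \<in> {1..<nat k}"
    then have "nat (k - int m) = nat k - m" "k - int m \<ge> 1" by auto
    then show "CC t (int m) * CC t (k - int m) = (2*(aa t^m + bb t^m)) * (2*(aa t^(nat k - m) + bb t^(nat k - m)))"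
      using \<open>m \<in> {1..<nat k}\<close> by (simp add: CC_def)
  qed
  finally show ?thesis .
qed

lemma CC_conv0:
  assumes k: "k < 1"
  shows "(\<Sum>\<^sub>\<infinity>m::int. CC t m * CC t (k - m)) = 0"
  by (rule infsum_0) (use k in \<open>auto simp: CC_def\<close>)

lemma CC_ode:
  "((\<lambda>\<tau>. CC \<tau> k) has_vector_derivative
     (- (\<i> * of_int (k^2)) * CC t k + (\<i> * of_int k / 2) * (\<Sum>\<^sub>\<infinity>m::int. CC t m * CC t (k - m)))) (at t within S)"
proof (cases "k \<ge> 1")
  case True
  define j where "j = nat k - 1"
  have kj: "nat k = Suc j" "k = int (Suc j)" using True by (auto simp: j_def)
  have CCe: "(\<lambda>\<tau>. CC \<tau> k) = (\<lambda>\<tau>. 2 * (aa \<tau> ^ Suc j + bb \<tau> ^ Suc j))"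
    using True by (simp add: CC_def kj(1))
  have "of_nat (Suc j) * (2 * (aa t ^ j * DA (of_real t) + bb t ^ j * DB (of_real t))) =
     - (\<i> * of_nat (Suc j)^2) * (2 * (aa t^(Suc j) + bb t^(Suc j)))
     + (\<i> * of_nat (Suc j) / 2) * (\<Sum>m\<in>{1..<Suc j}. (2*(aa t^m + bb t^m)) * (2*(aa t^(Suc j - m) + bb t^(Suc j - m))))"
    by (rule ode_alg) (use AB_ne[of t] DA_rel[of t] DB_rel[of t] in \<open>simp_all add: aa_def bb_def\<close>)
  moreover have "(\<Sum>\<^sub>\<infinity>m::int. CC t m * CC t (k - m)) = (\<Sum>m\<in>{1..<Suc j}. (2*(aa t^m + bb t^m)) * (2*(aa t^(Suc j - m) + bb t^(Suc j - m))))"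
    using CC_conv[OF True, of t] unfolding kj(1) .
  moreover have "CC t k = 2 * (aa t^(Suc j) + bb t^(Suc j))" using True by (simp add: CC_def kj(1))
  ultimately have eq: "2 * (of_nat (Suc j) * aa t ^ (Suc j - 1) * DA (of_real t) + of_nat (Suc j) * bb t ^ (Suc j - 1) * DB (of_real t))
    = - (\<i> * of_int (k^2)) * CC t k + (\<i> * of_int k / 2) * (\<Sum>\<^sub>\<infinity>m::int. CC t m * CC t (k - m))"
    by (simp add: kj algebra_simps)
  show ?thesis unfolding CCe eq[symmetric] by (rule CC_pow_deriv)
next
  case False
  have CCe: "(\<lambda>\<tau>. CC \<tau> k) = (\<lambda>\<tau>. 0)" using False by (simp add: CC_def fun_eq_iff)
  have "CC t k = 0" using False by (simp add: CC_def)
  moreover have "(\<Sum>\<^sub>\<infinity>m::int. CC t m * CC t (k - m)) = 0" using False by (simp add: CC_conv0)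
  ultimately show ?thesis unfolding CCe by simp
qed


lemma ode_part:
  assumes t: "t \<in> {0..<pi/2}"
  shows "((\<lambda>\<tau>. fourier_coeff (uu \<tau>) k) has_vector_derivative
           (- (\<i> * of_int (k^2)) * fourier_coeff (uu t) k
            + (\<i> * of_int k / 2) * (\<Sum>\<^sub>\<infinity>m::int. fourier_coeff (uu t) m * fourier_coeff (uu t) (k - m))))
        (at t within {0..<pi/2})"
proof -
  have e: "fourier_coeff (uu t) = CC t" using t by (auto simp: fun_eq_iff fc_uu)
  show ?thesis unfolding e
    by (rule has_vector_derivative_transform_within[OF CC_ode[of k t "{0..<pi/2}"], of 1])
       (use t in \<open>auto simp: fc_uu\<close>)
qed

lemma den_ge: "1 - norm p \<le> norm (1 - p * exp (\<i> * of_real x))"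
proof -
  have "norm (1::complex) \<le> norm (1 - p * exp (\<i> * of_real x)) + norm (p * exp (\<i> * of_real x))"
    using norm_triangle_ineq[of "1 - p * exp (\<i> * of_real x)" "p * exp (\<i> * of_real x)"] by simp
  then show ?thesis by (simp add: norm_mult)
qed

lemma FF_diff:
  assumes p: "norm p < 1" and q: "norm q < 1"
  shows "norm (FF p x - FF q x) \<le> norm (p - q) / ((1 - norm p) * (1 - norm q))"
proof -
  let ?z = "exp (\<i> * of_real x)"
  have dp: "1 - p * ?z \<noteq> 0" and dq: "1 - q * ?z \<noteq> 0" using FF_den p q by auto
  have "FF p x - FF q x = (p - q) * ?z / ((1 - p * ?z) * (1 - q * ?z))"
    unfolding FF_def using dp dq by (simp add: field_simps)
  then have "norm (FF p x - FF q x) = norm (p - q) / (norm (1 - p * ?z) * norm (1 - q * ?z))"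
    by (simp add: norm_mult norm_divide)
  also have "\<dots> \<le> norm (p - q) / ((1 - norm p) * (1 - norm q))"
    by (rule divide_left_mono) (use p q den_ge[of p x] den_ge[of q x] in \<open>auto intro!: mult_mono mult_pos_pos\<close>)
  finally show ?thesis .
qed

lemma L2_cont:
  assumes t: "t \<in> {0..<pi/2}"
  shows "((\<lambda>\<tau>. L2_norm (\<lambda>x. uu \<tau> x - uu t x)) \<longlongrightarrow> 0) (at t within {0..<pi/2})"
proof -
  define D where "D \<tau> = 2 * (norm (aa \<tau> - aa t) / ((1 - norm (aa \<tau>)) * (1 - norm (aa t))))
     + 2 * (norm (bb \<tau> - bb t) / ((1 - norm (bb \<tau>)) * (1 - norm (bb t))))" for \<tau>
  have at1: "norm (aa t) < 1" "norm (bb t) < 1" using ab_small t by auto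
  have "isCont D t" unfolding D_def
    by (intro continuous_intros isCont_aa isCont_bb) (use at1 in auto)
  then have "(D \<longlongrightarrow> D t) (at t within {0..<pi/2})"
    unfolding isCont_def by (rule tendsto_within_subset) simp
  moreover have "D t = 0" by (simp add: D_def)
  ultimately have D0: "(D \<longlongrightarrow> 0) (at t within {0..<pi/2})" by simp
  have bnd: "L2_norm (\<lambda>x. uu \<tau> x - uu t x) \<le> sqrt (2*pi) * D \<tau>" if \<tau>: "\<tau> \<in> {0..<pi/2}" for \<tau>
  proof -
    have a\<tau>: "norm (aa \<tau>) < 1" "norm (bb \<tau>) < 1" using ab_small \<tau> by auto
    have Dnn: "D \<tau> \<ge> 0" unfolding D_def using a\<tau> at1 by (auto intro!: add_nonneg_nonneg divide_nonneg_nonneg)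
    have pw: "(norm (uu \<tau> x - uu t x))^2 \<le> (D \<tau>)^2" for x
    proof -
      have "uu \<tau> x - uu t x = 2 * (FF (aa \<tau>) x - FF (aa t) x) + 2 * (FF (bb \<tau>) x - FF (bb t) x)"
        by (simp add: uu_def algebra_simps)
      then have "norm (uu \<tau> x - uu t x) \<le> 2 * norm (FF (aa \<tau>) x - FF (aa t) x) + 2 * norm (FF (bb \<tau>) x - FF (bb t) x)"
        by (metis norm_triangle_ineq norm_mult norm_numeral)
      also have "\<dots> \<le> D \<tau>" unfolding D_def
        using FF_diff[OF a\<tau>(1) at1(1), of x] FF_diff[OF a\<tau>(2) at1(2), of x] by linarith
      finally show ?thesis by (rule power_mono) simp
    qed
    have i1: "set_integrable lborel {0..2*pi} (\<lambda>x. (norm (uu \<tau> x - uu t x))^2)"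
      unfolding set_integrable_def
      by (rule borel_integrable_compact) (use t \<tau> in \<open>auto intro!: continuous_intros cont_uu\<close>)
    have i2: "set_integrable lborel {0..2*pi} (\<lambda>x. (D \<tau>)^2)"
      unfolding set_integrable_def by (rule borel_integrable_compact) auto
    have "(LINT x:{0..2*pi}|lborel. (norm (uu \<tau> x - uu t x))^2) \<le> (LINT x:{0..2*pi}|lborel. (D \<tau>)^2)"
      by (rule set_integral_mono[OF i1 i2 pw])
    also have "\<dots> = 2*pi * (D \<tau>)^2" by (simp add: set_integral_const)
    finally have "L2_norm (\<lambda>x. uu \<tau> x - uu t x) \<le> sqrt (2*pi * (D \<tau>)^2)"
      unfolding L2_norm_def by (rule real_sqrt_le_mono)
    also have "\<dots> = sqrt (2*pi) * D \<tau>" using Dnn by (simp add: real_sqrt_mult)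
    finally show ?thesis .
  qed
  show ?thesis
  proof (rule tendsto_sandwich[where f="\<lambda>_. 0"])
    show "\<forall>\<^sub>F \<tau> in at t within {0..<pi/2}. 0 \<le> L2_norm (\<lambda>x. uu \<tau> x - uu t x)"
      by (auto simp: L2_norm_def set_lebesgue_integral_def indicator_def intro!: integral_nonneg)
    show "\<forall>\<^sub>F \<tau> in at t within {0..<pi/2}. L2_norm (\<lambda>x. uu \<tau> x - uu t x) \<le> sqrt (2*pi) * D \<tau>"
      using bnd by (auto simp: eventually_at_filter)
    show "((\<lambda>_. 0) \<longlongrightarrow> 0) (at t within {0..<pi/2})" by simp
    show "((\<lambda>\<tau>. sqrt (2*pi) * D \<tau>) \<longlongrightarrow> 0) (at t within {0..<pi/2})"
      using tendsto_mult_left[OF D0, of "sqrt (2*pi)"] by simp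
  qed
qed

lemma is_sol: "is_solution uu (uu 0) (pi/2)"
  unfolding is_solution_def using uu_L2 L2_cont ode_part by auto


lemma CC_lim: "((\<lambda>t. CC t k) \<longlongrightarrow> CC (pi/2) k) (at_left (pi/2))"
proof -
  have "isCont (\<lambda>t. CC t k) (pi/2)"
    unfolding CC_def by (cases "k \<ge> 1") (auto intro!: continuous_intros isCont_aa isCont_bb)
  then show ?thesis unfolding isCont_def by (rule tendsto_within_subset) simp
qed

lemma CC_pi2: assumes "k \<ge> 1" shows "norm (CC (pi/2) k) \<ge> 1"
proof -
  define w where "w = (- \<i>/10) ^ nat k + \<i> ^ nat k"
  have "CC (pi/2) k = 2 * w" using assms by (simp add: CC_def aa_pi2 bb_pi2 w_def)
  then have nC: "norm (CC (pi/2) k) = 2 * norm w" by (simp add: norm_mult)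
  moreover have "norm ((- \<i>/10) ^ nat k) \<le> 1/10"
  proof -
    have "norm ((- \<i>/10) ^ nat k) = (1/10) ^ nat k" by (simp add: norm_power norm_divide)
    also have "\<dots> \<le> (1/10) ^ 1" using assms by (intro power_decreasing) auto
    finally show ?thesis by simp
  qed
  moreover have "norm (\<i> ^ nat k) = 1" by (simp add: norm_power)
  moreover have "norm (\<i> ^ nat k) \<le> norm ((- \<i>/10) ^ nat k + \<i> ^ nat k) + norm ((- \<i>/10) ^ nat k)"
    by (metis add_diff_cancel_left' norm_triangle_ineq4 add.commute norm_minus_commute)
  ultimately show ?thesis unfolding w_def by linarith
qed

lemma ev_pos: "eventually (\<lambda>t. 0 < t \<and> t < pi/2) (at_left (pi/2))"
proof -
  have "eventually (\<lambda>t. t \<in> {0<..<pi/2}) (at_left (pi/2))"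
    by (rule eventually_at_left_real) simp
  then show ?thesis by simp
qed

lemma fc_ev: assumes "k \<ge> 1" shows "eventually (\<lambda>t. norm (fourier_coeff (uu t) k) > 1/2) (at_left (pi/2))"
proof -
  have "((\<lambda>t. norm (CC t k)) \<longlongrightarrow> norm (CC (pi/2) k)) (at_left (pi/2))"
    by (rule tendsto_norm[OF CC_lim])
  moreover have "norm (CC (pi/2) k) > 1/2" using CC_pi2[OF assms] by simp
  ultimately have "eventually (\<lambda>t. norm (CC t k) > 1/2) (at_left (pi/2))"
    by (rule order_tendstoD)
  with ev_pos show ?thesis
    by eventually_elim (simp add: fc_uu)
qed

lemma fc_ev_all: "eventually (\<lambda>t. \<forall>k\<in>{1..int K}. norm (fourier_coeff (uu t) k) > 1/2) (at_left (pi/2))"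
  apply (rule eventually_ball_finite)
   apply simp
  apply (rule ballI)
  apply (rule fc_ev)
  apply simp
  done

lemma nn_count_ge:
  fixes f :: "int \<Rightarrow> ennreal"
  assumes "finite B" "B \<subseteq> UNIV - {0}"
  shows "(\<Sum>a\<in>B. f a) \<le> (\<integral>\<^sup>+x. f x \<partial>count_space (UNIV - {0}))"
proof -
  have "(\<Sum>a\<in>B. f a) = (\<integral>\<^sup>+x. f x \<partial>count_space B)" using assms by (simp add: nn_integral_count_space_finite)
  also have "\<dots> = (\<integral>\<^sup>+x. f x * indicator B x \<partial>count_space UNIV)"
    by (rule nn_integral_count_space_indicator) simp
  also have "\<dots> \<le> (\<integral>\<^sup>+x. f x * indicator (UNIV - {0}) x \<partial>count_space UNIV)"
    by (rule nn_integral_mono) (use assms in \<open>auto simp: indicator_def\<close>)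
  also have "\<dots> = (\<integral>\<^sup>+x. f x \<partial>count_space (UNIV - {0}))"
    by (rule nn_integral_count_space_indicator[symmetric]) simp
  finally show ?thesis .
qed

lemma FL_inf:
  assumes s: "s > 0"
  shows "((\<lambda>t. FL_norm s \<infinity> (uu t)) \<longlongrightarrow> \<infinity>) (at_left (pi/2))"
  unfolding tendsto_PInfty
proof
  fix M :: real
  define K where "K = nat \<lceil>(2 * \<bar>M\<bar> + 2) powr (1/s)\<rceil> + 1"
  have K1: "K \<ge> 1" by (simp add: K_def)
  have "real K \<ge> (2 * \<bar>M\<bar> + 2) powr (1/s)" unfolding K_def by linarith
  then have "real K powr s \<ge> ((2 * \<bar>M\<bar> + 2) powr (1/s)) powr s"
    using s by (intro powr_mono2) auto
  also have "((2 * \<bar>M\<bar> + 2) powr (1/s)) powr s = 2 * \<bar>M\<bar> + 2"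
    using s by (simp add: powr_powr)
  finally have KM: "real K powr s \<ge> 2 * \<bar>M\<bar> + 2" .
  show "eventually (\<lambda>t. ereal M < FL_norm s \<infinity> (uu t)) (at_left (pi/2))"
    using fc_ev[of "int K"] K1 
  proof -
  have ev: "eventually (\<lambda>t. norm (fourier_coeff (uu t) (int K)) > 1/2) (at_left (pi/2))"
    using fc_ev[of "int K"] K1 by simp
  show ?thesis using ev
  proof (eventually_elim)
    case (elim t)
    have "ereal M < ereal (\<bar>real_of_int (int K)\<bar> powr s * norm (fourier_coeff (uu t) (int K)))"
    proof -
      have "\<bar>real_of_int (int K)\<bar> powr s * norm (fourier_coeff (uu t) (int K)) \<ge> real K powr s * (1/2)"
        using elim mult_left_mono[of "1/2" "norm (fourier_coeff (uu t) (int K))" "real K powr s"] by simp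
      with KM show ?thesis by simp
    qed
    also have "\<dots> \<le> FL_norm s \<infinity> (uu t)"
      unfolding FL_norm_def if_P[OF refl] using K1 by (intro SUP_upper) auto
    finally show ?case .
  qed
  qed
qed


lemma FL_fin:
  assumes s: "s \<ge> 0" and q: "q > 0"
  shows "((\<lambda>t. FL_norm s (ereal q) (uu t)) \<longlongrightarrow> \<infinity>) (at_left (pi/2))"
  unfolding tendsto_PInfty
proof
  fix M :: real
  define K where "K = nat \<lceil>(2 * \<bar>M\<bar> + 2) powr q\<rceil> + 1"
  define c where "c = (1/2::real) powr q"
  have c0: "c > 0" by (simp add: c_def)
  have "real K \<ge> (2 * \<bar>M\<bar> + 2) powr q" unfolding K_def by linarith
  then have "real K powr (1/q) \<ge> ((2 * \<bar>M\<bar> + 2) powr q) powr (1/q)"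
    using q by (intro powr_mono2) auto
  also have "((2 * \<bar>M\<bar> + 2) powr q) powr (1/q) = 2 * \<bar>M\<bar> + 2"
    using q by (simp add: powr_powr)
  finally have KM: "real K powr (1/q) \<ge> 2 * \<bar>M\<bar> + 2" .
  have cq: "c powr (1/q) = 1/2" using q by (simp add: c_def powr_powr)
  show "eventually (\<lambda>t. ereal M < FL_norm s (ereal q) (uu t)) (at_left (pi/2))"
    using fc_ev_all[of K]
  proof (eventually_elim)
    case (elim t)
    define I where "I = (\<integral>\<^sup>+ k. ennreal ((\<bar>real_of_int k\<bar> powr s * norm (fourier_coeff (uu t) k)) powr q) \<partial>count_space (UNIV - {0::int}))"
    have "(\<Sum>k\<in>{1..int K}. ennreal c) \<le> (\<Sum>k\<in>{1..int K}. ennreal ((\<bar>real_of_int k\<bar> powr s * norm (fourier_coeff (uu t) k)) powr q))"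
    proof (rule sum_mono)
      fix k assume k: "k \<in> {1..int K}"
      have "1 \<le> \<bar>real_of_int k\<bar> powr s" using k s by (intro ge_one_powr_ge_zero) auto
      moreover have "1/2 \<le> norm (fourier_coeff (uu t) k)" using elim k less_imp_le by fastforce
      ultimately have "1/2 \<le> \<bar>real_of_int k\<bar> powr s * norm (fourier_coeff (uu t) k)"
        by (metis mult_mono' mult_1 zero_le_one less_eq_real_def divide_nonneg_nonneg zero_le_numeral)
      then have "c \<le> (\<bar>real_of_int k\<bar> powr s * norm (fourier_coeff (uu t) k)) powr q"
        unfolding c_def using q by (intro powr_mono2) auto
      then show "ennreal c \<le> ennreal ((\<bar>real_of_int k\<bar> powr s * norm (fourier_coeff (uu t) k)) powr q)"
        by (rule ennreal_leI)
    qed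
    also have "\<dots> \<le> I" unfolding I_def by (rule nn_count_ge) auto
    finally have IK: "ennreal (real K * c) \<le> I" using c0 by (simp add: ennreal_mult' ennreal_of_nat_eq_real_of_nat)
    show ?case
    proof (cases "I = \<infinity>")
      case True
      then show ?thesis unfolding FL_norm_def by (simp add: Let_def I_def)
    next
      case False
      have "enn2real (ennreal (real K * c)) \<le> enn2real I"
        by (rule enn2real_mono[OF IK]) (use False in \<open>simp add: less_top\<close>)
      then have "real K * c \<le> enn2real I" using c0 by simp
      then have "(real K * c) powr (1/q) \<le> enn2real I powr (1/q)"
        using q c0 by (intro powr_mono2) auto
      moreover have "(real K * c) powr (1/q) = real K powr (1/q) * (1/2)"
        using c0 by (simp add: powr_mult cq)
      ultimately have "M < enn2real I powr (1/q)" using KM by linarith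
      then show ?thesis unfolding FL_norm_def using False by (simp add: Let_def I_def)
    qed
  qed
qed


lemma norm_1_minus_expi: "norm (1 - exp (\<i> * of_real y)) \<le> \<bar>y\<bar>"
proof -
  have e: "exp (\<i> * of_real y) = cis y" by (simp add: cis_conv_exp)
  have "(norm (1 - exp (\<i> * of_real y)))^2 = (1 - cos y)^2 + (sin y)^2"
    unfolding e cmod_power2 by (simp add: cis.ctr)
  also have "\<dots> = 2 - 2 * cos y" using sin_cos_squared_add[of y] by (simp add: power2_eq_square algebra_simps)
  also have "cos y = 1 - 2 * (sin (y/2))^2" using cos_double_sin[of "y/2"] by simp
  also have "2 - 2 * (1 - 2 * (sin (y/2))^2) = 4 * (sin (y/2))^2" by simp
  also have "\<dots> \<le> 4 * (y/2)^2"
  proof -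
    have "\<bar>sin (y/2)\<bar> \<le> \<bar>y/2\<bar>" by (rule abs_sin_x_le_abs_x)
    then have "(sin (y/2))^2 \<le> (y/2)^2" by (metis abs_le_square_iff)
    then show ?thesis by simp
  qed
  also have "\<dots> = \<bar>y\<bar>^2" by (simp add: power2_eq_square)
  finally show ?thesis by (rule power2_le_imp_le) simp
qed

lemma norm_FF_le: "norm q < 1 \<Longrightarrow> norm (FF q x) \<le> norm q / (1 - norm q)"
proof -
  assume q: "norm q < 1"
  have "norm (FF q x) = norm q / norm (1 - q * exp (\<i> * of_real x))"
    by (simp add: FF_def norm_mult norm_divide)
  also have "\<dots> \<le> norm q / (1 - norm q)"
    by (rule divide_left_mono) (use q den_ge[of q x] in \<open>auto intro!: mult_pos_pos\<close>)
  finally show ?thesis .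
qed

definition Us :: "real \<Rightarrow> complex" where "Us x = 2 * FF (- \<i>/10) x + 2 * FF \<i> x"

lemma i_exp_shift: "\<i> * exp (\<i> * of_real x) = exp (\<i> * of_real (x - 3*pi/2))"
proof -
  have c: "cos (3*pi/2) = 0" "sin (3*pi/2) = -1"
    using cos_periodic_pi[of "pi/2"] sin_periodic_pi[of "pi/2"] by (simp_all add: algebra_simps)
  have "exp (\<i> * of_real (x - 3*pi/2)) = exp (\<i> * of_real x) * cis (-(3*pi/2))"
    by (simp add: cis_conv_exp exp_add[symmetric] algebra_simps)
  also have "cis (-(3*pi/2)) = \<i>" using c by (simp add: complex_eq_iff)
  finally show ?thesis by simp
qed

lemma cos_lt1: "0 < (y::real) \<Longrightarrow> y \<le> 1 \<Longrightarrow> cos y < 1"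
  using cos_monotone_0_pi[of 0 y] pi_gt3 by simp

lemma Us_bound:
  assumes x: "3*pi/2 < x" "x \<le> 3*pi/2 + 1"
  shows "1 - \<i> * exp (\<i> * of_real x) \<noteq> 0" and "norm (Us x) \<ge> 1 / (x - 3*pi/2)"
proof -
  define y where "y = x - 3*pi/2"
  have y: "0 < y" "y \<le> 1" using x by (auto simp: y_def)
  have sh: "\<i> * exp (\<i> * of_real x) = exp (\<i> * of_real y)" unfolding y_def by (rule i_exp_shift)
  have "Re (1 - exp (\<i> * of_real y)) = 1 - cos y" by (simp add: cis_conv_exp[symmetric] cis.ctr)
  then have "Re (1 - exp (\<i> * of_real y)) > 0" using cos_lt1[OF y] by simp
  then have nz: "1 - exp (\<i> * of_real y) \<noteq> 0" by auto
  then show "1 - \<i> * exp (\<i> * of_real x) \<noteq> 0" unfolding sh .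
  have "norm (FF \<i> x) = 1 / norm (1 - exp (\<i> * of_real y))"
    unfolding FF_def sh by (simp add: norm_divide)
  moreover have "norm (1 - exp (\<i> * of_real y)) \<le> y" using norm_1_minus_expi[of y] y by simp
  moreover have "norm (1 - exp (\<i> * of_real y)) > 0" using nz by simp
  ultimately have F1: "norm (FF \<i> x) \<ge> 1 / y" by (simp add: frac_le)
  have F2: "norm (FF (- \<i>/10) x) \<le> 1/9"
    using norm_FF_le[of "- \<i>/10" x] by (simp add: norm_divide)
  have "norm (2 * FF \<i> x) \<le> norm (Us x) + norm (2 * FF (- \<i>/10) x)"
    unfolding Us_def by (metis add_diff_cancel_left' norm_triangle_ineq4 add.commute norm_minus_commute)
  then have "2 * norm (FF \<i> x) \<le> norm (Us x) + 2 * norm (FF (- \<i>/10) x)" by (simp add: norm_mult)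
  moreover have "1 / y \<ge> 1" using y by simp
  ultimately show "norm (Us x) \<ge> 1 / (x - 3*pi/2)" using F1 F2 unfolding y_def[symmetric] by linarith
qed


lemma uu_lim:
  assumes x: "3*pi/2 < x" "x \<le> 3*pi/2 + 1"
  shows "((\<lambda>t. uu t x) \<longlongrightarrow> Us x) (at_left (pi/2))"
proof -
  have d1: "1 - aa (pi/2) * exp (\<i> * of_real x) \<noteq> 0" unfolding aa_pi2 by (rule FF_den) (simp add: norm_divide)
  have d2: "1 - bb (pi/2) * exp (\<i> * of_real x) \<noteq> 0" unfolding bb_pi2 by (rule Us_bound(1)[OF x])
  have "isCont (\<lambda>t. uu t x) (pi/2)"
    unfolding uu_def FF_def by (intro continuous_intros isCont_aa isCont_bb d1 d2)
  then have "((\<lambda>t. uu t x) \<longlongrightarrow> uu (pi/2) x) (at_left (pi/2))"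
    unfolding isCont_def by (rule tendsto_within_subset) simp
  moreover have "uu (pi/2) x = Us x" by (simp add: uu_def Us_def aa_pi2 bb_pi2)
  ultimately show ?thesis by simp
qed

lemma ennreal_all_nat_top: "(\<And>n::nat. ennreal (real n) \<le> X) \<Longrightarrow> X = \<infinity>"
proof (cases X rule: ennreal_cases)
  case (real r)
  assume h: "\<And>n::nat. ennreal (real n) \<le> X"
  obtain n :: nat where n: "r < real n" using reals_Archimedean2 by blast
  have "ennreal (real n) \<le> ennreal r" using h[of n] real by simp
  then have "real n \<le> r" using real by (simp add: ennreal_le_iff)
  with n show ?thesis by simp
qed simp

lemma G_inf: "(\<integral>\<^sup>+x. ennreal (1 / (x - 3*pi/2)) * indicator {3*pi/2<..3*pi/2+1} x \<partial>lborel) = \<infinity>"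
proof (rule ennreal_all_nat_top)
  fix n :: nat
  define e where "e = exp (- real n)"
  have e: "0 < e" "e \<le> 1" by (auto simp: e_def)
  have "(\<integral>\<^sup>+x. ennreal (1 / (x - 3*pi/2)) * indicator {3*pi/2 + e..3*pi/2+1} x \<partial>lborel)
      = ennreal (ln (3*pi/2+1 - 3*pi/2) - ln (3*pi/2 + e - 3*pi/2))"
  proof (rule nn_integral_FTC_Icc)
    show "(\<lambda>x. 1 / (x - 3*pi/2)) \<in> borel_measurable borel" by measurable
    fix x assume x: "x \<in> {3*pi/2 + e..3*pi/2+1}"
    then have xp: "x - 3*pi/2 > 0" using e by auto
    show "((\<lambda>x. ln (x - 3*pi/2)) has_real_derivative 1 / (x - 3*pi/2)) (at x)"
      using xp by (auto intro!: derivative_eq_intros)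
    show "0 \<le> 1 / (x - 3*pi/2)" using xp by simp
  qed (use e in simp)
  also have "ln (3*pi/2+1 - 3*pi/2) - ln (3*pi/2 + e - 3*pi/2) = real n" by (simp add: e_def)
  finally have eq: "(\<integral>\<^sup>+x. ennreal (1 / (x - 3*pi/2)) * indicator {3*pi/2 + e..3*pi/2+1} x \<partial>lborel) = ennreal (real n)" .
  have "(\<integral>\<^sup>+x. ennreal (1 / (x - 3*pi/2)) * indicator {3*pi/2 + e..3*pi/2+1} x \<partial>lborel)
     \<le> (\<integral>\<^sup>+x. ennreal (1 / (x - 3*pi/2)) * indicator {3*pi/2<..3*pi/2+1} x \<partial>lborel)"
    by (rule nn_integral_mono) (use e in \<open>auto simp: indicator_def\<close>)
  then show "ennreal (real n) \<le> (\<integral>\<^sup>+x. ennreal (1 / (x - 3*pi/2)) * indicator {3*pi/2<..3*pi/2+1} x \<partial>lborel)"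
    unfolding eq .
qed


lemma uu_meas: "0 \<le> t \<Longrightarrow> t < pi/2 \<Longrightarrow> uu t \<in> borel_measurable lborel"
  using cont_uu[of t UNIV] borel_measurable_continuous_onI by (simp add: measurable_lborel1)

definition Ip :: "real \<Rightarrow> real \<Rightarrow> ennreal" where
  "Ip q t = (\<integral>\<^sup>+ x. ennreal (norm (uu t x) powr q) * indicator {0..2*pi} x \<partial>lborel)"

lemma Ip_blow:
  assumes q: "q \<ge> 1"
  shows "eventually (\<lambda>t. ennreal R < Ip q t) (at_left (pi/2))"
proof (rule sequentially_imp_eventually_at_left[where b=0])
  show "(0::real) < pi/2" by simp
  fix f :: "nat \<Rightarrow> real"
  assume f0: "\<And>n. 0 < f n" and f1: "\<And>n. f n < pi/2" and "incseq f" and fl: "f \<longlonglongrightarrow> pi/2"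
  have flim: "filterlim f (at_left (pi/2)) sequentially"
    by (rule tendsto_imp_filterlim_at_left[OF fl]) (use f1 in \<open>simp add: always_eventually\<close>)
  define u where "u n x = ennreal (norm (uu (f n) x) powr q) * indicator {0..2*pi} x" for n x
  have um: "u n \<in> borel_measurable lborel" for n
  proof -
    have [measurable]: "uu (f n) \<in> borel_measurable lborel" using f0[of n] f1[of n] by (intro uu_meas) auto
    show ?thesis unfolding u_def by measurable
  qed
  have G: "ennreal (1 / (x - 3*pi/2)) * indicator {3*pi/2<..3*pi/2+1} x \<le> liminf (\<lambda>n. u n x)" for x
  proof (cases "x \<in> {3*pi/2<..3*pi/2+1}")
    case True
    then have x: "3*pi/2 < x" "x \<le> 3*pi/2 + 1" by auto
    have x02: "x \<in> {0..2*pi}" using x pi_gt3 by auto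
    have b1: "norm (Us x) \<ge> 1 / (x - 3*pi/2)" by (rule Us_bound(2)[OF x])
    have y1: "1 / (x - 3*pi/2) \<ge> 1" using x by simp
    have "((\<lambda>n. uu (f n) x) \<longlongrightarrow> Us x) sequentially"
      by (rule filterlim_compose[OF uu_lim[OF x] flim])
    then have "((\<lambda>n. ennreal (norm (uu (f n) x) powr q)) \<longlongrightarrow> ennreal (norm (Us x) powr q)) sequentially"
    proof -
      have "norm (Us x) \<ge> 1" using b1 y1 by linarith
      then have "Us x \<noteq> 0" by auto
      then show ?thesis using \<open>((\<lambda>n. uu (f n) x) \<longlongrightarrow> Us x) sequentially\<close>
        by (intro tendsto_ennrealI tendsto_powr tendsto_norm tendsto_const) auto
    qed
    then have "((\<lambda>n. u n x) \<longlongrightarrow> ennreal (norm (Us x) powr q)) sequentially"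
      unfolding u_def using x02 by simp
    then have "liminf (\<lambda>n. u n x) = ennreal (norm (Us x) powr q)"
      by (rule lim_imp_Liminf[rotated]) simp
    moreover have "1 / (x - 3*pi/2) \<le> norm (Us x) powr q"
    proof -
      have "norm (Us x) powr 1 \<le> norm (Us x) powr q" using q b1 y1 by (intro powr_mono) auto
      then show ?thesis using b1 by simp
    qed
    ultimately show ?thesis using True by (simp add: ennreal_leI)
  qed simp
  have "\<infinity> = (\<integral>\<^sup>+x. ennreal (1 / (x - 3*pi/2)) * indicator {3*pi/2<..3*pi/2+1} x \<partial>lborel)"
    by (rule G_inf[symmetric])
  also have "\<dots> \<le> (\<integral>\<^sup>+x. liminf (\<lambda>n. u n x) \<partial>lborel)" by (rule nn_integral_mono) (rule G)
  also have "\<dots> \<le> liminf (\<lambda>n. integral\<^sup>N lborel (u n))" by (rule nn_integral_liminf[OF um])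
  finally have "liminf (\<lambda>n. integral\<^sup>N lborel (u n)) = \<infinity>" by (simp add: top_unique)
  then have "ennreal R < liminf (\<lambda>n. integral\<^sup>N lborel (u n))" by simp
  then have "eventually (\<lambda>n. ennreal R < integral\<^sup>N lborel (u n)) sequentially" by (rule less_LiminfD)
  then show "eventually (\<lambda>n. ennreal R < Ip q (f n)) sequentially"
    by (simp add: Ip_def u_def[abs_def])
qed


lemma Lp_fin:
  assumes q: "q \<ge> 1"
  shows "((\<lambda>t. Lp_norm (ereal q) (uu t)) \<longlongrightarrow> \<infinity>) (at_left (pi/2))"
  unfolding tendsto_PInfty
proof
  fix M :: real
  define R where "R = (\<bar>M\<bar> + 1) powr q"
  have R0: "R \<ge> 0" by (simp add: R_def)
  have RM: "R powr (1/q) = \<bar>M\<bar> + 1" using q by (simp add: R_def powr_powr)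
  show "eventually (\<lambda>t. ereal M < Lp_norm (ereal q) (uu t)) (at_left (pi/2))"
    using Ip_blow[OF q, of R]
  proof eventually_elim
    case (elim t)
    show ?case
    proof (cases "Ip q t = \<infinity>")
      case True
      then show ?thesis by (simp add: Lp_norm_def Ip_def Let_def)
    next
      case False
      then obtain r where r: "Ip q t = ennreal r" "r \<ge> 0" by (cases "Ip q t" rule: ennreal_cases) auto
      then have "R < r" using elim R0 by (simp add: ennreal_less_iff)
      then have "R powr (1/q) < r powr (1/q)" using q R0 by (intro powr_less_mono2) auto
      then have "M < r powr (1/q)" unfolding RM by linarith
      then show ?thesis using False r by (simp add: Lp_norm_def Ip_def[symmetric] Let_def)
    qed
  qed
qed

lemma Lp_inf: "((\<lambda>t. Lp_norm \<infinity> (uu t)) \<longlongrightarrow> \<infinity>) (at_left (pi/2))"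
  unfolding tendsto_PInfty
proof
  fix M :: real
  show "eventually (\<lambda>t. ereal M < Lp_norm \<infinity> (uu t)) (at_left (pi/2))"
    using Ip_blow[of 1 "2*pi*(\<bar>M\<bar>+1)", OF order_refl]
  proof eventually_elim
    case (elim t)
    show ?case
    proof (rule ccontr)
      assume "\<not> ereal M < Lp_norm \<infinity> (uu t)"
      then have le: "esssup (restrict_space lborel {0..2*pi}) (\<lambda>x. ereal (norm (uu t x))) \<le> ereal M"
        by (simp add: Lp_norm_def)
      have "AE x in restrict_space lborel {0..2*pi}. ereal (norm (uu t x)) \<le> esssup (restrict_space lborel {0..2*pi}) (\<lambda>x. ereal (norm (uu t x)))"
        by (rule esssup_AE)
      then have "AE x in restrict_space lborel {0..2*pi}. norm (uu t x) \<le> M"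
      proof eventually_elim
        case (elim x)
        then have "ereal (norm (uu t x)) \<le> ereal M" using le by (rule order_trans)
        then show ?case by simp
      qed
      then have ae: "AE x in lborel. x \<in> {0..2*pi} \<longrightarrow> norm (uu t x) \<le> M"
        by (subst (asm) AE_restrict_space_iff) auto
      have "Ip 1 t \<le> (\<integral>\<^sup>+ x. ennreal \<bar>M\<bar> * indicator {0..2*pi} x \<partial>lborel)"
        unfolding Ip_def
        by (rule nn_integral_mono_AE) (use ae in \<open>eventually_elim, auto simp: indicator_def ennreal_leI\<close>)
      also have "\<dots> = ennreal \<bar>M\<bar> * ennreal (2*pi)" by (simp add: nn_integral_cmult_indicator)
      also have "\<dots> = ennreal (2*pi*\<bar>M\<bar>)" by (simp add: ennreal_mult'[symmetric] mult_ac)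
      also have "\<dots> \<le> ennreal (2*pi*(\<bar>M\<bar>+1))" by (intro ennreal_leI) simp
      finally show False using elim by simp
    qed
  qed
qed


theorem theorem1p2:
  shows "\<exists>(\<phi>::real \<Rightarrow> complex) (tstar::real) (u::real \<Rightarrow> real \<Rightarrow> complex).
           \<phi> \<in> L2_0 \<and> tstar > 0 \<and> is_solution u \<phi> tstar \<and>
           (\<forall>p::ereal. 1 \<le> p \<longrightarrow> ((\<lambda>t. Lp_norm p (u t)) \<longlongrightarrow> \<infinity>) (at_left tstar)) \<and>
           (\<forall>(s::real) (p::ereal).
              ((p = \<infinity> \<and> s > 1/2) \<or> (\<exists>q::real. p = ereal q \<and> q > 2 \<and> s > 1/2 - 1/q)
               \<or> (p = 2 \<and> s \<ge> 0))
              \<longrightarrow> ((\<lambda>t. FL_norm s p (u t)) \<longlongrightarrow> \<infinity>) (at_left tstar))"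
proof (intro exI conjI allI impI)
  show "uu 0 \<in> L2_0" by (rule uu_L2) auto
  show "(0::real) < pi/2" by simp
  show "is_solution uu (uu 0) (pi/2)" by (rule is_sol)
next
  fix p :: ereal assume p: "1 \<le> p"
  show "((\<lambda>t. Lp_norm p (uu t)) \<longlongrightarrow> \<infinity>) (at_left (pi/2))"
  proof (cases p)
    case (real r)
    then have "r \<ge> 1" using p by simp
    then show ?thesis unfolding real by (rule Lp_fin)
  next
    case PInf
    then show ?thesis using Lp_inf by simp
  next
    case MInf
    then show ?thesis using p by simp
  qed
next
  fix s :: real and p :: ereal
  assume h: "(p = \<infinity> \<and> s > 1/2) \<or> (\<exists>q::real. p = ereal q \<and> q > 2 \<and> s > 1/2 - 1/q) \<or> (p = 2 \<and> s \<ge> 0)"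
  show "((\<lambda>t. FL_norm s p (uu t)) \<longlongrightarrow> \<infinity>) (at_left (pi/2))"
  proof -
    { assume "p = \<infinity> \<and> s > 1/2"
      then have ?thesis using FL_inf[of s] by simp }
    moreover
    { assume "\<exists>q::real. p = ereal q \<and> q > 2 \<and> s > 1/2 - 1/q"
      then obtain q where q: "p = ereal q" "q > 2" "s > 1/2 - 1/q" by blast
      have "1/q < 1/2" using q(2) by (simp add: divide_simps)
      then have "s \<ge> 0" using q(3) by linarith
      then have ?thesis unfolding q(1) by (rule FL_fin) (use q in simp) }
    moreover
    { assume a: "p = 2 \<and> s \<ge> 0"
      then have "p = ereal 2" by simp
      then have ?thesis using FL_fin[of s 2] a by simp }
    ultimately show ?thesis using h by blast
  qed
qed

end
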